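(* Let $\sigma=\{\sigma_n\}$ and $\omega=\{\omega_n\}$ be quantum sources on the same sequence of finite-dimensional Hilbert spaces, $t\in(0,1)$, and $\rho_n=t\sigma_n+(1-t)\omega_n$. Then the strong converse rate of $\rho$ is \[ \mathcal{R}^*=\underline{S}(\rho)=\min\big[\underline{S}(\sigma),\underline{S}(\omega)\big]. \]
   Context: For self-adjoint $A=\sum_i\lambda_i|i\rangle\langle i|$, $\{A\ge0\}:=\sum_{\lambda_i\ge0}|i\rangle\langle i|$ and $\{A\ge B\}:=\{A-B\ge0\}$. For a source $\tau=\{\tau_n\}$, the spectral inf-entropy rate is $\underline{S}(\tau)=\sup\{\gamma:\ \limsup_n\mathrm{Tr}[\{\tau_n\ge e^{-n\gamma}I_n\}(\tau_n-e^{-n\gamma}I_n)]=0\}$ (natural logarithms). The strong converse rate $\mathcal{R}^*$ of a source is the supremum of rates $R$ such that every compression scheme of rate $R$ has entanglement fidelity tending to $0$; it equals $\underline{S}$ of the source. *)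

theory Defs
  imports "Jordan_Normal_Form.Schur_Decomposition" "HOL-Library.Extended_Real" "HOL-Library.Liminf_Limsup"
begin

definition hermitian_mat :: "nat \<Rightarrow> complex mat \<Rightarrow> bool" where
  "hermitian_mat n A \<longleftrightarrow> A \<in> carrier_mat n n \<and> mat_adjoint A = A"

definition unitary_mat :: "nat \<Rightarrow> complex mat \<Rightarrow> bool" where
  "unitary_mat n U \<longleftrightarrow> U \<in> carrier_mat n n \<and> U * mat_adjoint U = 1\<^sub>m n \<and> mat_adjoint U * U = 1\<^sub>m n"

definition psd_mat :: "nat \<Rightarrow> complex mat \<Rightarrow> bool" where
  "psd_mat n A \<longleftrightarrow> hermitian_mat n A \<and>
     (\<forall>v \<in> carrier_vec n. 0 \<le> Re (conjugate v \<bullet> (A *\<^sub>v v)))"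

definition mat_trace :: "complex mat \<Rightarrow> complex" where
  "mat_trace A = (\<Sum>i<dim_row A. A $$ (i,i))"

definition density_mat :: "nat \<Rightarrow> complex mat \<Rightarrow> bool" where
  "density_mat n A \<longleftrightarrow> psd_mat n A \<and> mat_trace A = 1"

definition quantum_source :: "(nat \<Rightarrow> nat) \<Rightarrow> (nat \<Rightarrow> complex mat) \<Rightarrow> bool" where
  "quantum_source d \<tau> \<longleftrightarrow> (\<forall>n. density_mat (d n) (\<tau> n))"

text \<open>For self-adjoint A = sum_i lambda_i |i><i| (spectral decomposition A = U D U^*),
  the projection {A \<ge> 0} = sum over lambda_i \<ge> 0 of |i><i|.\<close>
definition nonneg_proj :: "nat \<Rightarrow> complex mat \<Rightarrow> complex mat" where
  "nonneg_proj n A = (SOME P. \<exists>U lam. unitary_mat n U \<and>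
      A = U * mat_diag n (\<lambda>i. complex_of_real (lam i)) * mat_adjoint U \<and>
      P = U * mat_diag n (\<lambda>i. if lam i \<ge> 0 then 1 else 0) * mat_adjoint U)"

definition tail_trace :: "nat \<Rightarrow> complex mat \<Rightarrow> real \<Rightarrow> real" where
  "tail_trace n A c = Re (mat_trace (nonneg_proj n (A - complex_of_real c \<cdot>\<^sub>m 1\<^sub>m n) *
                                  (A - complex_of_real c \<cdot>\<^sub>m 1\<^sub>m n)))"

text \<open>Spectral inf-entropy rate (natural logarithms); valued in extended reals.\<close>
definition spectral_inf_entropy_rate :: "(nat \<Rightarrow> nat) \<Rightarrow> (nat \<Rightarrow> complex mat) \<Rightarrow> ereal" where
  "spectral_inf_entropy_rate d \<tau> =
     Sup {ereal \<gamma> | \<gamma>. limsup (\<lambda>n. ereal (tail_trace (d n) (\<tau> n) (exp (- real n * \<gamma>)))) = 0}"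

end

theory Submission imports Defs begin

lemma adj_dims[simp]: "dim_row (mat_adjoint A) = dim_col A" "dim_col (mat_adjoint A) = dim_row A"
  unfolding mat_adjoint_def by auto

lemma adj_index[simp]: "i < dim_col A \<Longrightarrow> j < dim_row A \<Longrightarrow> mat_adjoint A $$ (i,j) = conjugate (A $$ (j,i))"
  unfolding mat_adjoint_def by (auto simp: mat_of_rows_def)

lemma adj_carrier[simp]: "A \<in> carrier_mat n m \<Longrightarrow> mat_adjoint A \<in> carrier_mat m n"
  unfolding carrier_mat_def by auto

lemma adj_mult: fixes A B :: "complex mat"
  assumes "A \<in> carrier_mat n k" "B \<in> carrier_mat k m"
  shows "mat_adjoint (A * B) = mat_adjoint B * mat_adjoint A"
  by (rule eq_matI, insert assms, auto simp: scalar_prod_def cnj_sum intro!: sum.cong)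

lemma adj_adj[simp]: fixes A :: "complex mat" shows "mat_adjoint (mat_adjoint A) = A"
  by (rule eq_matI, auto)

lemma adj_one[simp]: "mat_adjoint (1\<^sub>m n :: complex mat) = 1\<^sub>m n"
  by (rule eq_matI, auto)

lemma adj_diag_real[simp]: "mat_adjoint (mat_diag n (\<lambda>i. complex_of_real (f i))) = mat_diag n (\<lambda>i. complex_of_real (f i))"
  by (rule eq_matI, auto simp: mat_diag_def)


lemma cscalar_self_real: fixes w :: "complex vec"
  shows "w \<bullet>c w = complex_of_real (\<Sum>i<dim_vec w. (cmod (w $ i))^2)"
proof -
  have "w \<bullet>c w = (\<Sum>i<dim_vec w. w$i * cnj (w$i))" by (simp add: scalar_prod_def atLeast0LessThan)
  also have "\<dots> = (\<Sum>i<dim_vec w. complex_of_real ((cmod (w$i))^2))"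
    by (rule sum.cong, simp, metis complex_norm_square)
  also have "\<dots> = complex_of_real (\<Sum>i<dim_vec w. (cmod (w $ i))^2)" by (simp only: of_real_sum)
  finally show ?thesis .
qed

lemma cscalar_self_zero: fixes w :: "complex vec"
  shows "w \<bullet>c w = 0 \<longleftrightarrow> w = 0\<^sub>v (dim_vec w)"
proof -
  have "w \<bullet>c w = 0 \<longleftrightarrow> (\<Sum>i<dim_vec w. (cmod (w $ i))^2) = 0"
    unfolding cscalar_self_real by (simp only: of_real_eq_0_iff)
  also have "\<dots> \<longleftrightarrow> (\<forall>i<dim_vec w. w $ i = 0)"
    by (subst sum_nonneg_eq_0_iff, auto)
  also have "\<dots> \<longleftrightarrow> w = 0\<^sub>v (dim_vec w)" by (auto simp: vec_eq_iff)
  finally show ?thesis .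
qed

lemma exists_unitary_first_col:
  fixes v :: "complex vec"
  assumes v: "v \<in> carrier_vec n" and v0: "v \<noteq> 0\<^sub>v n" and n: "n > 0"
  shows "\<exists>W c. unitary_mat n W \<and> col W 0 = c \<cdot>\<^sub>v v"
proof -
  interpret cof_vec_space n "TYPE(complex)" .
  define b where "b = basis_completion v"
  from basis_completion[OF v v0, folded b_def]
  have dist_b: "distinct b" 
    and indep: "\<not> lin_dep (set b)" and b: "set b \<subseteq> carrier_vec n" and hdb: "hd b = v" 
    and len_b: "length b = n" by auto
  from hdb len_b n obtain vs where bv: "b = v # vs" by (cases b, auto)
  define ws where "ws = gram_schmidt n b"
  from gram_schmidt_result[OF b dist_b indep refl, folded ws_def]
  have ws: "set ws \<subseteq> carrier_vec n" "corthogonal ws" "length ws = n" 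
    by (auto simp: len_b)
  from gram_schmidt_hd[OF v, of vs, folded bv] have hdws: "hd ws = v" unfolding ws_def .
  define nr where "nr j = sqrt (\<Sum>i<n. (cmod (ws ! j $ i))^2)" for j
  have wsj: "j < n \<Longrightarrow> ws ! j \<in> carrier_vec n" for j using ws by auto
  have self: "j < n \<Longrightarrow> ws ! j \<bullet>c ws ! j = complex_of_real ((nr j)^2)" for j
  proof -
    assume j: "j < n"
    have "(nr j)^2 = (\<Sum>i<n. (cmod (ws ! j $ i))^2)" unfolding nr_def by (simp add: sum_nonneg)
    thus ?thesis using cscalar_self_real[of "ws ! j"] wsj[OF j] by simp
  qed
  have nz: "j < n \<Longrightarrow> ws ! j \<bullet>c ws ! j \<noteq> 0" for j
    using corthogonalD[OF ws(2), of j j] ws(3) by auto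
  have nrpos: "j < n \<Longrightarrow> nr j > 0" for j
  proof -
    assume j: "j < n"
    have "(\<Sum>i<n. (cmod (ws ! j $ i))^2) \<ge> 0" by (rule sum_nonneg, simp)
    moreover have "(\<Sum>i<n. (cmod (ws ! j $ i))^2) \<noteq> 0" using self[OF j] nz[OF j] unfolding nr_def by auto
    ultimately show ?thesis unfolding nr_def by simp
  qed
  define W where "W = mat n n (\<lambda>(i,j). (ws ! j $ i) / complex_of_real (nr j))"
  have W: "W \<in> carrier_mat n n" unfolding W_def by auto
  have WW: "mat_adjoint W * W = 1\<^sub>m n"
  proof (rule eq_matI)
    fix i j assume i: "i < dim_row (1\<^sub>m n :: complex mat)" and j: "j < dim_col (1\<^sub>m n :: complex mat)"
    have "(mat_adjoint W * W) $$ (i,j) = (\<Sum>k<n. cnj (ws ! i $ k) * (ws ! j $ k)) / (complex_of_real (nr i) * complex_of_real (nr j))"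
      using i j W unfolding W_def
      by (auto simp: scalar_prod_def atLeast0LessThan sum_divide_distrib intro!: sum.cong)
    also have "(\<Sum>k<n. cnj (ws ! i $ k) * (ws ! j $ k)) = ws ! j \<bullet>c ws ! i"
      using wsj[of i] wsj[of j] i j by (auto simp: scalar_prod_def atLeast0LessThan intro!: sum.cong)
    finally show "(mat_adjoint W * W) $$ (i,j) = 1\<^sub>m n $$ (i,j)"
      using i j self[of i] corthogonalD[OF ws(2), of j i] ws(3) nrpos[of i]
      by (auto simp: power2_eq_square)
  qed (insert W, auto)
  have WW2: "W * mat_adjoint W = 1\<^sub>m n"
    by (rule mat_mult_left_right_inverse[OF _ W WW], insert W, auto)
  have "col W 0 = (1 / complex_of_real (nr 0)) \<cdot>\<^sub>v v"
    using n W hdws ws(3) wsj[of 0] v unfolding W_def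
    by (cases ws, auto simp: vec_eq_iff)
  thus ?thesis using W WW WW2 unfolding unitary_mat_def by blast
qed


lemma mult_sq_carrier: "A \<in> carrier_mat n n \<Longrightarrow> B \<in> carrier_mat n n \<Longrightarrow> A * B \<in> carrier_mat n n"
  by auto

lemma unitary_carrier: "unitary_mat n U \<Longrightarrow> U \<in> carrier_mat n n"
  unfolding unitary_mat_def by auto

lemma unitary_mult: fixes U V :: "complex mat"
  assumes U: "unitary_mat n U" and V: "unitary_mat n V"
  shows "unitary_mat n (U * V)"
proof -
  have Uc: "U \<in> carrier_mat n n" and Vc: "V \<in> carrier_mat n n" using U V unitary_carrier by auto
  have a: "mat_adjoint (U * V) = mat_adjoint V * mat_adjoint U" using adj_mult[OF Uc Vc] .
  have UH: "mat_adjoint U \<in> carrier_mat n n" and VH: "mat_adjoint V \<in> carrier_mat n n" using Uc Vc by auto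
  have "U * V * (mat_adjoint V * mat_adjoint U) = U * (V * mat_adjoint V) * mat_adjoint U"
    by (simp add: assoc_mult_mat[OF Uc Vc mult_carrier_mat[OF VH UH]] assoc_mult_mat[OF Vc VH UH]
      assoc_mult_mat[OF Uc mult_carrier_mat[OF Vc VH] UH])
  also have "\<dots> = 1\<^sub>m n" using U V Uc unfolding unitary_mat_def by simp
  finally have 1: "U * V * mat_adjoint (U * V) = 1\<^sub>m n" unfolding a .
  have "mat_adjoint V * mat_adjoint U * (U * V) = mat_adjoint V * (mat_adjoint U * U) * V"
    by (simp add: assoc_mult_mat[OF VH UH mult_carrier_mat[OF Uc Vc]] assoc_mult_mat[OF UH Uc Vc]
      assoc_mult_mat[OF VH mult_carrier_mat[OF UH Uc] Vc])
  also have "\<dots> = 1\<^sub>m n" using U V Vc unfolding unitary_mat_def by simp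
  finally have 2: "mat_adjoint (U * V) * (U * V) = 1\<^sub>m n" unfolding a .
  show ?thesis using 1 2 Uc Vc unfolding unitary_mat_def by auto
qed

lemma spectral:
  fixes A :: "complex mat"
  assumes "A \<in> carrier_mat n n" "mat_adjoint A = A"
  shows "\<exists>U lam. unitary_mat n U \<and> A = U * mat_diag n (\<lambda>i. complex_of_real (lam i)) * mat_adjoint U"
  using assms
proof (induct n arbitrary: A)
  case 0
  have "A = 1\<^sub>m 0 * mat_diag 0 (\<lambda>i. complex_of_real 0) * mat_adjoint (1\<^sub>m 0)"
    by (rule eq_matI, insert 0, auto simp: mat_diag_def)
  moreover have "unitary_mat 0 (1\<^sub>m 0 :: complex mat)" unfolding unitary_mat_def by auto
  ultimately show ?case by (intro exI[of _ "1\<^sub>m 0"] exI[of _ "\<lambda>i. 0"], simp)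
next
  case (Suc m A)
  let ?n = "Suc m"
  have A: "A \<in> carrier_mat ?n ?n" and herm: "mat_adjoint A = A" using Suc by auto
  obtain as where cp: "char_poly A = (\<Prod> a \<leftarrow> as. [:- a, 1:])" and las: "length as = ?n"
    using char_poly_factorized[OF A] by blast
  then obtain e es where as: "as = e # es" by (cases as, auto)
  have "eigenvalue A e" unfolding eigenvalue_root_char_poly[OF A] cp as by simp
  then obtain v where ev: "eigenvector A v e" unfolding eigenvalue_def by blast
  hence v: "v \<in> carrier_vec ?n" and v0: "v \<noteq> 0\<^sub>v ?n" and Av: "A *\<^sub>v v = e \<cdot>\<^sub>v v"
    unfolding eigenvector_def using A by auto
  obtain W c where Wu: "unitary_mat ?n W" and colW: "col W 0 = c \<cdot>\<^sub>v v"
    using exists_unitary_first_col[OF v v0] by blast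
  have W: "W \<in> carrier_mat ?n ?n" and WW: "mat_adjoint W * W = 1\<^sub>m ?n" and WW2: "W * mat_adjoint W = 1\<^sub>m ?n"
    using Wu unfolding unitary_mat_def by auto
  have WH: "mat_adjoint W \<in> carrier_mat ?n ?n" using W by simp
  define A' where "A' = mat_adjoint W * A * W"
  have A'c: "A' \<in> carrier_mat ?n ?n" unfolding A'_def using W A by auto
  have hA': "mat_adjoint A' = A'"
    unfolding A'_def adj_mult[OF mult_carrier_mat[OF WH A] W] adj_mult[OF WH A] herm adj_adj
    using assoc_mult_mat[OF WH A W] by simp
  have "col A' 0 = (mat_adjoint W * A) *\<^sub>v col W 0"
    unfolding A'_def by (rule col_mult2[OF _ W], insert W A, auto)
  also have "\<dots> = mat_adjoint W *\<^sub>v (A *\<^sub>v col W 0)"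
    by (rule assoc_mult_mat_vec[OF WH A], unfold colW, insert v, simp)
  also have "A *\<^sub>v col W 0 = e \<cdot>\<^sub>v col W 0"
    unfolding colW using mult_mat_vec[OF A v] Av mult_mat_vec[OF A v] by (auto simp: smult_smult_assoc mult.commute)
  also have "mat_adjoint W *\<^sub>v (e \<cdot>\<^sub>v col W 0) = e \<cdot>\<^sub>v (mat_adjoint W *\<^sub>v col W 0)"
    by (rule mult_mat_vec[OF WH], unfold colW, insert v, simp)
  also have "mat_adjoint W *\<^sub>v col W 0 = col (mat_adjoint W * W) 0"
    by (rule col_mult2[symmetric, OF WH W], simp)
  also have "\<dots> = unit_vec ?n 0" unfolding WW by simp
  finally have colA': "col A' 0 = e \<cdot>\<^sub>v unit_vec ?n 0" .
  have A'i0: "i < ?n \<Longrightarrow> A' $$ (i,0) = (if i = 0 then e else 0)" for i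
    using arg_cong[OF colA', of "\<lambda>x. x $ i"] A'c by auto
  have A'0j: "j < ?n \<Longrightarrow> A' $$ (0,j) = (if j = 0 then cnj e else 0)" for j
  proof -
    assume j: "j < ?n"
    have "A' $$ (0,j) = mat_adjoint A' $$ (0,j)" using hA' by simp
    also have "\<dots> = cnj (A' $$ (j,0))" using A'c j by simp
    finally show ?thesis using A'i0[OF j] by simp
  qed
  have ereal: "cnj e = e" using A'i0[of 0] A'0j[of 0] by simp
  hence eRe: "e = complex_of_real (Re e)" using ereal by (auto simp: complex_eq_iff)
  define A3 where "A3 = mat m m (\<lambda>(i,j). A' $$ (Suc i, Suc j))"
  have A3c: "A3 \<in> carrier_mat m m" unfolding A3_def by auto
  have hA3: "mat_adjoint A3 = A3"
  proof (rule eq_matI)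
    fix i j assume "i < dim_row A3" "j < dim_col A3"
    hence i: "i < m" and j: "j < m" using A3c by auto
    have "A' $$ (Suc i, Suc j) = mat_adjoint A' $$ (Suc i, Suc j)" using hA' by simp
    thus "mat_adjoint A3 $$ (i,j) = A3 $$ (i,j)" using i j A'c unfolding A3_def by simp
  qed (insert A3c, auto)
  obtain U3 lam3 where U3u: "unitary_mat m U3" and A3eq: "A3 = U3 * mat_diag m (\<lambda>i. complex_of_real (lam3 i)) * mat_adjoint U3"
    using Suc(1)[OF A3c hA3] by blast
  have U3: "U3 \<in> carrier_mat m m" and U3U3: "U3 * mat_adjoint U3 = 1\<^sub>m m" and U3U3': "mat_adjoint U3 * U3 = 1\<^sub>m m"
    using U3u unfolding unitary_mat_def by auto
  define D3 where "D3 = mat_diag m (\<lambda>i. complex_of_real (lam3 i))"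
  have D3: "D3 \<in> carrier_mat m m" unfolding D3_def by simp
  define V where "V = four_block_mat (1\<^sub>m 1) (0\<^sub>m 1 m) (0\<^sub>m m 1) U3"
  define VH where "VH = four_block_mat (1\<^sub>m 1) (0\<^sub>m 1 m) (0\<^sub>m m 1) (mat_adjoint U3)"
  have Vc: "V \<in> carrier_mat ?n ?n" unfolding V_def using U3 by auto
  have VHc: "VH \<in> carrier_mat ?n ?n" unfolding VH_def using U3 by auto
  have VH: "mat_adjoint V = VH"
    by (rule eq_matI, insert U3, auto simp: V_def VH_def)
  have VV: "V * VH = 1\<^sub>m ?n" unfolding V_def VH_def
    by (subst mult_four_block_mat[of _ 1 1 _ m _ m _ _ 1 _ m], insert U3, auto simp: U3U3)
  have VV': "VH * V = 1\<^sub>m ?n" unfolding V_def VH_def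
    by (subst mult_four_block_mat[of _ 1 1 _ m _ m _ _ 1 _ m], insert U3, auto simp: U3U3')
  have Vu: "unitary_mat ?n V" unfolding unitary_mat_def using Vc VH VV VV' by auto
  define lam where "lam i = (if i = 0 then Re e else lam3 (i - 1))" for i
  define E where "E = mat 1 1 (\<lambda>_. e)"
  have Ec: "E \<in> carrier_mat 1 1" unfolding E_def by auto
  have Deq: "mat_diag ?n (\<lambda>i. complex_of_real (lam i)) = four_block_mat E (0\<^sub>m 1 m) (0\<^sub>m m 1) D3"
    by (rule eq_matI, auto simp: mat_diag_def E_def D3_def lam_def eRe[symmetric])
  have "V * four_block_mat E (0\<^sub>m 1 m) (0\<^sub>m m 1) D3 = four_block_mat E (0\<^sub>m 1 m) (0\<^sub>m m 1) (U3 * D3)"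
    unfolding V_def
    by (subst mult_four_block_mat[of _ 1 1 _ m _ m _ _ 1 _ m], insert U3 D3 Ec, auto)
  also have "\<dots> * VH = four_block_mat E (0\<^sub>m 1 m) (0\<^sub>m m 1) (U3 * D3 * mat_adjoint U3)"
    unfolding VH_def
    by (subst mult_four_block_mat[of _ 1 1 _ m _ m _ _ 1 _ m], insert U3 D3 Ec, auto)
  also have "\<dots> = A'"
    by (rule eq_matI, insert A'c A'i0 A'0j ereal, auto simp: E_def A3eq[symmetric, folded D3_def] A3_def)
  finally have VDV: "V * four_block_mat E (0\<^sub>m 1 m) (0\<^sub>m m 1) D3 * VH = A'" .
  define U where "U = W * V"
  have Uu: "unitary_mat ?n U" unfolding U_def by (rule unitary_mult[OF Wu Vu])
  have Uc: "U \<in> carrier_mat ?n ?n" using Uu unitary_carrier by auto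
  have "U * mat_diag ?n (\<lambda>i. complex_of_real (lam i)) * mat_adjoint U
      = W * (V * four_block_mat E (0\<^sub>m 1 m) (0\<^sub>m m 1) D3 * VH) * mat_adjoint W"
  proof -
    have Fc: "four_block_mat E (0\<^sub>m 1 m) (0\<^sub>m m 1) D3 \<in> carrier_mat ?n ?n" using Ec D3 by auto
    show ?thesis unfolding Deq U_def adj_mult[OF W Vc] VH
      using W Vc VHc Fc WH by (simp add: assoc_mult_mat[of _ ?n ?n _ ?n _ ?n])
  qed
  also have "\<dots> = W * mat_adjoint W * A * (W * mat_adjoint W)" unfolding VDV A'_def using W WH A by (simp add: assoc_mult_mat[of _ ?n ?n _ ?n _ ?n] mult_sq_carrier)
  also have "\<dots> = A" unfolding WW2 using A by simp
  finally show ?case using Uu by metis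
qed


lemma trace_cyclic: fixes A B :: "complex mat"
  assumes "A \<in> carrier_mat n m" "B \<in> carrier_mat m n"
  shows "mat_trace (A * B) = mat_trace (B * A)"
proof -
  have "mat_trace (A * B) = (\<Sum>i<n. \<Sum>k<m. A $$ (i,k) * B $$ (k,i))"
    using assms unfolding mat_trace_def by (auto simp: scalar_prod_def atLeast0LessThan)
  also have "\<dots> = (\<Sum>k<m. \<Sum>i<n. B $$ (k,i) * A $$ (i,k))"
    by (subst sum.swap, simp add: mult.commute)
  also have "\<dots> = mat_trace (B * A)"
    using assms unfolding mat_trace_def by (auto simp: scalar_prod_def atLeast0LessThan)
  finally show ?thesis .
qed

lemma trace_diag_right: fixes M :: "complex mat"
  assumes "M \<in> carrier_mat n n"
  shows "mat_trace (M * mat_diag n f) = (\<Sum>i<n. M $$ (i,i) * f i)"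
  unfolding mat_trace_def using assms
  by (auto simp: scalar_prod_def atLeast0LessThan mat_diag_def if_distrib cong: if_cong intro!: sum.cong)

lemma trace_decomp: fixes Q V :: "complex mat"
  assumes V: "unitary_mat n V" and Q: "Q \<in> carrier_mat n n"
  shows "mat_trace (Q * (V * mat_diag n f * mat_adjoint V)) = (\<Sum>i<n. (mat_adjoint V * Q * V) $$ (i,i) * f i)"
proof -
  have Vc: "V \<in> carrier_mat n n" using V unitary_carrier by auto
  have VH: "mat_adjoint V \<in> carrier_mat n n" using Vc by simp
  have D: "mat_diag n f \<in> carrier_mat n n" by simp
  have "mat_trace (Q * (V * mat_diag n f * mat_adjoint V)) = mat_trace ((Q * V * mat_diag n f) * mat_adjoint V)"
    using Q Vc VH D by (simp add: assoc_mult_mat[of _ n n _ n _ n] mult_sq_carrier)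
  also have "\<dots> = mat_trace (mat_adjoint V * (Q * V * mat_diag n f))"
    by (rule trace_cyclic[of _ n n], insert Q Vc VH D, auto simp: mult_sq_carrier)
  also have "\<dots> = mat_trace ((mat_adjoint V * Q * V) * mat_diag n f)"
    using Q Vc VH D by (simp add: assoc_mult_mat[of _ n n _ n _ n] mult_sq_carrier)
  also have "\<dots> = (\<Sum>i<n. (mat_adjoint V * Q * V) $$ (i,i) * f i)"
    by (rule trace_diag_right, insert Q Vc VH, auto simp: mult_sq_carrier)
  finally show ?thesis .
qed

definition projform :: "nat \<Rightarrow> complex mat \<Rightarrow> bool" where
  "projform n Q \<longleftrightarrow> (\<exists>U d. unitary_mat n U \<and> (\<forall>j. 0 \<le> d j \<and> d j \<le> 1) \<and>
      Q = U * mat_diag n (\<lambda>j. complex_of_real (d j)) * mat_adjoint U)"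

lemma projform_carrier: "projform n Q \<Longrightarrow> Q \<in> carrier_mat n n"
  unfolding projform_def using unitary_carrier by fastforce

lemma projform_zero: "projform n (0\<^sub>m n n)"
proof -
  have "unitary_mat n (1\<^sub>m n :: complex mat)" unfolding unitary_mat_def by auto
  moreover have "0\<^sub>m n n = 1\<^sub>m n * mat_diag n (\<lambda>j. complex_of_real 0) * mat_adjoint (1\<^sub>m n :: complex mat)"
    by (rule eq_matI, auto simp: mat_diag_def)
  ultimately show ?thesis unfolding projform_def by (intro exI[of _ "1\<^sub>m n"] exI[of _ "\<lambda>j. 0"], auto)
qed

lemma projform_diag_entry:
  assumes Q: "projform n Q" and V: "unitary_mat n V" and i: "i < n"
  shows "\<exists>r. (mat_adjoint V * Q * V) $$ (i,i) = complex_of_real r \<and> 0 \<le> r \<and> r \<le> 1"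
proof -
  obtain U d where U: "unitary_mat n U" and d: "\<And>j. 0 \<le> d j \<and> d j \<le> 1"
    and Qeq: "Q = U * mat_diag n (\<lambda>j. complex_of_real (d j)) * mat_adjoint U"
    using Q unfolding projform_def by blast
  have Uc: "U \<in> carrier_mat n n" and Vc: "V \<in> carrier_mat n n" using U V unitary_carrier by auto
  have UH: "mat_adjoint U \<in> carrier_mat n n" and VH: "mat_adjoint V \<in> carrier_mat n n" using Uc Vc by auto
  define M where "M = mat_adjoint U * V"
  have Mc: "M \<in> carrier_mat n n" unfolding M_def using UH Vc by auto
  have MH: "mat_adjoint M = mat_adjoint V * U" unfolding M_def adj_mult[OF UH Vc] by simp
  have MHc: "mat_adjoint M \<in> carrier_mat n n" using Mc by simp
  define D where "D = mat_diag n (\<lambda>j. complex_of_real (d j))"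
  have Dc: "D \<in> carrier_mat n n" unfolding D_def by simp
  have eq1: "mat_adjoint V * Q * V = mat_adjoint M * D * M"
    unfolding Qeq D_def[symmetric] using Uc UH Vc VH Dc
    by (simp add: MH[unfolded M_def] M_def assoc_mult_mat[of _ n n _ n _ n] mult_sq_carrier)
  have "mat_adjoint M * M = mat_adjoint V * (U * mat_adjoint U) * V"
    using Uc UH Vc VH
    by (simp add: MH[unfolded M_def] M_def assoc_mult_mat[of _ n n _ n _ n] mult_sq_carrier)
  also have "\<dots> = 1\<^sub>m n" using U V Vc unfolding unitary_mat_def by simp
  finally have MM: "mat_adjoint M * M = 1\<^sub>m n" .
  have sq: "cnj z * z = complex_of_real ((cmod z)^2)" for z
    by (metis complex_norm_square mult.commute)
  have "(mat_adjoint M * M) $$ (i,i) = (\<Sum>j<n. cnj (M $$ (j,i)) * M $$ (j,i))"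
    using Mc i by (auto simp: scalar_prod_def atLeast0LessThan)
  also have "\<dots> = complex_of_real (\<Sum>j<n. (cmod (M $$ (j,i)))^2)"
    unfolding sq of_real_sum ..
  finally have s0: "(mat_adjoint M * M) $$ (i,i) = complex_of_real (\<Sum>j<n. (cmod (M $$ (j,i)))^2)" .
  have "(mat_adjoint M * M) $$ (i,i) = 1" using MM i by simp
  hence "complex_of_real (\<Sum>j<n. (cmod (M $$ (j,i)))^2) = 1" using s0 by metis
  hence s1: "(\<Sum>j<n. (cmod (M $$ (j,i)))^2) = 1" by (simp only: of_real_eq_1_iff)
  have "(mat_adjoint M * D * M) $$ (i,i) = (\<Sum>j<n. cnj (M $$ (j,i)) * complex_of_real (d j) * M $$ (j,i))"
    using Mc i unfolding D_def
    by (auto simp: scalar_prod_def atLeast0LessThan mat_diag_def if_distrib cong: if_cong intro!: sum.cong)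
  also have "\<dots> = complex_of_real (\<Sum>j<n. d j * (cmod (M $$ (j,i)))^2)"
  proof -
    have sq3: "cnj z * complex_of_real r * z = complex_of_real (r * (cmod z)^2)" for z r
    proof -
      have "cnj z * complex_of_real r * z = complex_of_real r * (cnj z * z)" by (simp only: mult_ac)
      also have "\<dots> = complex_of_real r * complex_of_real ((cmod z)^2)" by (simp only: sq)
      also have "\<dots> = complex_of_real (r * (cmod z)^2)" by (simp only: of_real_mult)
      finally show ?thesis .
    qed
    show ?thesis unfolding of_real_sum by (rule sum.cong, simp, rule sq3)
  qed
  finally have e: "(mat_adjoint V * Q * V) $$ (i,i) = complex_of_real (\<Sum>j<n. d j * (cmod (M $$ (j,i)))^2)"
    unfolding eq1 .
  have "(\<Sum>j<n. d j * (cmod (M $$ (j,i)))^2) \<le> (\<Sum>j<n. (cmod (M $$ (j,i)))^2)"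
    by (rule sum_mono, insert d, auto intro: mult_left_le_one_le)
  moreover have "0 \<le> (\<Sum>j<n. d j * (cmod (M $$ (j,i)))^2)"
    by (rule sum_nonneg, insert d, auto)
  ultimately have "0 \<le> (\<Sum>j<n. d j * (cmod (M $$ (j,i)))^2) \<and> (\<Sum>j<n. d j * (cmod (M $$ (j,i)))^2) \<le> 1"
    using s1 by linarith
  thus ?thesis using e by blast
qed


lemma unitary_conj_diag: fixes U :: "complex mat"
  assumes U: "unitary_mat n U" and that: "D \<in> carrier_mat n n"
  shows "mat_adjoint U * (U * D * mat_adjoint U) * U = D"
proof -
  have Uc: "U \<in> carrier_mat n n" using U unitary_carrier by auto
  have UH: "mat_adjoint U \<in> carrier_mat n n" using Uc by simp
  have "mat_adjoint U * (U * D * mat_adjoint U) * U = (mat_adjoint U * U) * D * (mat_adjoint U * U)"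
    using Uc UH that by (simp add: assoc_mult_mat[of _ n n _ n _ n] mult_sq_carrier)
  also have "\<dots> = D" using U that unfolding unitary_mat_def by simp
  finally show ?thesis .
qed

lemma re_sum_bound:
  fixes lam r :: "nat \<Rightarrow> real"
  assumes "\<And>i. i < n \<Longrightarrow> 0 \<le> r i \<and> r i \<le> 1"
  shows "(\<Sum>i<n. r i * lam i) \<le> (\<Sum>i<n. (if 0 \<le> lam i then 1 else 0) * lam i)"
proof (rule sum_mono)
  fix i assume "i \<in> {..<n}"
  hence "0 \<le> r i" "r i \<le> 1" using assms by auto
  thus "r i * lam i \<le> (if 0 \<le> lam i then 1 else 0) * lam i"
    by (cases "0 \<le> lam i", auto intro: mult_left_le_one_le simp: mult_nonneg_nonpos)
qed

lemma trace_projform_real: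
  assumes Q: "projform n Q" and V: "unitary_mat n V"
  shows "\<exists>r. (\<forall>i<n. 0 \<le> r i \<and> r i \<le> 1) \<and>
     Re (mat_trace (Q * (V * mat_diag n (\<lambda>i. complex_of_real (lam i)) * mat_adjoint V))) = (\<Sum>i<n. r i * lam i)"
proof -
  define r where "r i = Re ((mat_adjoint V * Q * V) $$ (i,i))" for i
  have r: "i < n \<Longrightarrow> (mat_adjoint V * Q * V) $$ (i,i) = complex_of_real (r i) \<and> 0 \<le> r i \<and> r i \<le> 1" for i
    using projform_diag_entry[OF Q V, of i] unfolding r_def by auto
  have "Re (mat_trace (Q * (V * mat_diag n (\<lambda>i. complex_of_real (lam i)) * mat_adjoint V)))
      = Re (\<Sum>i<n. (mat_adjoint V * Q * V) $$ (i,i) * complex_of_real (lam i))"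
    using trace_decomp[OF V projform_carrier[OF Q]] by simp
  also have "\<dots> = (\<Sum>i<n. r i * lam i)"
    unfolding Re_sum by (rule sum.cong, simp, insert r, auto)
  finally show ?thesis using r by blast
qed

lemma nonneg_proj_props:
  fixes X :: "complex mat"
  assumes X: "X \<in> carrier_mat n n" and hX: "mat_adjoint X = X"
  shows "projform n (nonneg_proj n X)"
    and "\<And>Q. projform n Q \<Longrightarrow> Re (mat_trace (Q * X)) \<le> Re (mat_trace (nonneg_proj n X * X))"
proof -
  obtain U0 lam0 where "unitary_mat n U0" "X = U0 * mat_diag n (\<lambda>i. complex_of_real (lam0 i)) * mat_adjoint U0"
    using spectral[OF X hX] by blast
  hence ex: "\<exists>P U lam. unitary_mat n U \<and>
      X = U * mat_diag n (\<lambda>i. complex_of_real (lam i)) * mat_adjoint U \<and>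
      P = U * mat_diag n (\<lambda>i. if lam i \<ge> 0 then 1 else 0) * mat_adjoint U" by blast
  obtain U lam where U: "unitary_mat n U" and Xeq: "X = U * mat_diag n (\<lambda>i. complex_of_real (lam i)) * mat_adjoint U"
    and Peq: "nonneg_proj n X = U * mat_diag n (\<lambda>i. if lam i \<ge> 0 then 1 else 0) * mat_adjoint U"
    using someI_ex[OF ex] unfolding nonneg_proj_def by blast
  define d where "d i = (if lam i \<ge> 0 then 1 else 0 :: real)" for i
  have dd: "(\<lambda>i. if lam i \<ge> 0 then 1 else 0 :: complex) = (\<lambda>i. complex_of_real (d i))"
    unfolding d_def by auto
  have Peq': "nonneg_proj n X = U * mat_diag n (\<lambda>i. complex_of_real (d i)) * mat_adjoint U"
    unfolding Peq dd ..
  show P: "projform n (nonneg_proj n X)" unfolding projform_def Peq'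
    by (intro exI[of _ U] exI[of _ d], insert U, auto simp: d_def)
  have "Re (mat_trace (nonneg_proj n X * X)) = Re (\<Sum>i<n. (mat_adjoint U * nonneg_proj n X * U) $$ (i,i) * complex_of_real (lam i))"
    unfolding Xeq[symmetric] using trace_decomp[OF U projform_carrier[OF P], of "\<lambda>i. complex_of_real (lam i)"] Xeq by simp
  also have "mat_adjoint U * nonneg_proj n X * U = mat_diag n (\<lambda>i. complex_of_real (d i))"
  proof -
    have Uc: "U \<in> carrier_mat n n" using U unitary_carrier by auto
    have "mat_adjoint U * nonneg_proj n X * U = mat_adjoint U * (U * mat_diag n (\<lambda>i. complex_of_real (d i)) * mat_adjoint U) * U"
      unfolding Peq' ..
    also have "\<dots> = mat_diag n (\<lambda>i. complex_of_real (d i))" by (rule unitary_conj_diag[OF U], simp)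
    finally show ?thesis .
  qed
  also have "Re (\<Sum>i<n. mat_diag n (\<lambda>i. complex_of_real (d i)) $$ (i,i) * complex_of_real (lam i)) = (\<Sum>i<n. d i * lam i)"
    unfolding Re_sum by (rule sum.cong, auto simp: mat_diag_def)
  finally have PX: "Re (mat_trace (nonneg_proj n X * X)) = (\<Sum>i<n. d i * lam i)" .
  fix Q assume Q: "projform n Q"
  obtain r where r: "\<forall>i<n. 0 \<le> r i \<and> r i \<le> 1" and QX: "Re (mat_trace (Q * X)) = (\<Sum>i<n. r i * lam i)"
    using trace_projform_real[OF Q U, of lam] Xeq by auto
  show "Re (mat_trace (Q * X)) \<le> Re (mat_trace (nonneg_proj n X * X))"
    unfolding QX PX d_def by (rule re_sum_bound, insert r, auto)
qed

lemma row_adjoint: fixes V :: "complex mat"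
  assumes "V \<in> carrier_mat n n" "i < n"
  shows "row (mat_adjoint V) i = conjugate (col V i)"
  by (rule eq_vecI, insert assms, auto)

lemma projform_psd:
  assumes Q: "projform n Q" and W: "psd_mat n W"
  shows "0 \<le> Re (mat_trace (Q * W))"
proof -
  have Wc: "W \<in> carrier_mat n n" and hW: "mat_adjoint W = W" and pos: "\<And>v. v \<in> carrier_vec n \<Longrightarrow> 0 \<le> Re (conjugate v \<bullet> (W *\<^sub>v v))"
    using W unfolding psd_mat_def hermitian_mat_def by auto
  obtain V lam where V: "unitary_mat n V" and Weq: "W = V * mat_diag n (\<lambda>i. complex_of_real (lam i)) * mat_adjoint V"
    using spectral[OF Wc hW] by blast
  have Vc: "V \<in> carrier_mat n n" using V unitary_carrier by auto
  have lam: "0 \<le> lam i" if i: "i < n" for i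
  proof -
    have "mat_adjoint V * W * V = mat_diag n (\<lambda>i. complex_of_real (lam i))"
      unfolding Weq by (rule unitary_conj_diag[OF V], simp)
    hence "complex_of_real (lam i) = (mat_adjoint V * W * V) $$ (i,i)" using i by (simp add: mat_diag_def)
    also have "\<dots> = row (mat_adjoint V) i \<bullet> col (W * V) i"
      using Vc Wc i by (simp add: assoc_mult_mat[of _ n n _ n _ n] mult_sq_carrier)
    also have "\<dots> = conjugate (col V i) \<bullet> (W *\<^sub>v col V i)"
      using row_adjoint[OF Vc i] col_mult2[OF Wc Vc i] by simp
    finally have "lam i = Re (conjugate (col V i) \<bullet> (W *\<^sub>v col V i))" by (metis Re_complex_of_real)
    thus ?thesis using pos[of "col V i"] Vc i by simp
  qed
  obtain r where r: "\<forall>i<n. 0 \<le> r i \<and> r i \<le> 1" and QW: "Re (mat_trace (Q * W)) = (\<Sum>i<n. r i * lam i)"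
    using trace_projform_real[OF Q V, of lam] Weq by auto
  show ?thesis unfolding QW by (rule sum_nonneg, insert r lam, auto)
qed


lemma trace_add: "A \<in> carrier_mat n n \<Longrightarrow> B \<in> carrier_mat n n \<Longrightarrow> mat_trace (A + B) = mat_trace A + mat_trace B"
  unfolding mat_trace_def by (auto simp: sum.distrib)

lemma trace_smult: "A \<in> carrier_mat n n \<Longrightarrow> mat_trace (k \<cdot>\<^sub>m A) = k * mat_trace A"
  unfolding mat_trace_def by (auto simp: sum_distrib_left)

lemma trace_lin:
  fixes Q X Y :: "complex mat"
  assumes Q: "Q \<in> carrier_mat n n" and X: "X \<in> carrier_mat n n" and Y: "Y \<in> carrier_mat n n"
  shows "Re (mat_trace (Q * (complex_of_real a \<cdot>\<^sub>m X + complex_of_real b \<cdot>\<^sub>m Y)))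
       = a * Re (mat_trace (Q * X)) + b * Re (mat_trace (Q * Y))"
proof -
  have "Q * (complex_of_real a \<cdot>\<^sub>m X + complex_of_real b \<cdot>\<^sub>m Y) = complex_of_real a \<cdot>\<^sub>m (Q * X) + complex_of_real b \<cdot>\<^sub>m (Q * Y)"
  proof -
    have "Q * (complex_of_real a \<cdot>\<^sub>m X + complex_of_real b \<cdot>\<^sub>m Y) = Q * (complex_of_real a \<cdot>\<^sub>m X) + Q * (complex_of_real b \<cdot>\<^sub>m Y)"
      by (rule mult_add_distrib_mat[of Q n n], insert X Y Q, auto)
    also have "\<dots> = complex_of_real a \<cdot>\<^sub>m (Q * X) + complex_of_real b \<cdot>\<^sub>m (Q * Y)"
      using mult_smult_distrib[OF Q X] mult_smult_distrib[OF Q Y] by simp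
    finally show ?thesis .
  qed
  moreover have "Q * X \<in> carrier_mat n n" "Q * Y \<in> carrier_mat n n" using Q X Y by auto
  ultimately show ?thesis by (simp add: trace_add[of _ n] trace_smult[of _ n])
qed

lemma herm_lin:
  fixes X Y :: "complex mat"
  assumes X: "X \<in> carrier_mat n n" "mat_adjoint X = X" and Y: "Y \<in> carrier_mat n n" "mat_adjoint Y = Y"
  shows "mat_adjoint (complex_of_real a \<cdot>\<^sub>m X + complex_of_real b \<cdot>\<^sub>m Y) = complex_of_real a \<cdot>\<^sub>m X + complex_of_real b \<cdot>\<^sub>m Y"
proof (rule eq_matI)
  fix i j assume "i < dim_row (complex_of_real a \<cdot>\<^sub>m X + complex_of_real b \<cdot>\<^sub>m Y)"
    "j < dim_col (complex_of_real a \<cdot>\<^sub>m X + complex_of_real b \<cdot>\<^sub>m Y)"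
  hence i: "i < n" and j: "j < n" using X Y by auto
  have "X $$ (i,j) = cnj (X $$ (j,i))" using adj_index[of i X j, unfolded X(2)] X(1) i j by simp
  moreover have "Y $$ (i,j) = cnj (Y $$ (j,i))" using adj_index[of i Y j, unfolded Y(2)] Y(1) i j by simp
  ultimately show "mat_adjoint (complex_of_real a \<cdot>\<^sub>m X + complex_of_real b \<cdot>\<^sub>m Y) $$ (i, j) =
          (complex_of_real a \<cdot>\<^sub>m X + complex_of_real b \<cdot>\<^sub>m Y) $$ (i, j)" using X Y i j by simp
qed (insert X Y, auto)

lemma herm_one: "mat_adjoint (1\<^sub>m n :: complex mat) = 1\<^sub>m n" by simp

lemma psd_one: "psd_mat n (1\<^sub>m n :: complex mat)"
  unfolding psd_mat_def hermitian_mat_def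
proof (intro conjI ballI)
  fix v :: "complex vec" assume v: "v \<in> carrier_vec n"
  have "conjugate v \<bullet> (1\<^sub>m n *\<^sub>v v) = v \<bullet>c v"
    using v by (simp add: comm_scalar_prod[of _ n])
  thus "0 \<le> Re (conjugate v \<bullet> (1\<^sub>m n *\<^sub>v v))" unfolding cscalar_self_real by (simp add: sum_nonneg)
qed auto

lemma shift_eq: fixes A :: "complex mat" assumes "A \<in> carrier_mat n n"
  shows "A - complex_of_real c \<cdot>\<^sub>m 1\<^sub>m n = complex_of_real 1 \<cdot>\<^sub>m A + complex_of_real (- c) \<cdot>\<^sub>m 1\<^sub>m n"
  by (rule eq_matI, insert assms, auto)

lemma herm_shift: fixes A :: "complex mat" assumes "A \<in> carrier_mat n n" "mat_adjoint A = A"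
  shows "mat_adjoint (A - complex_of_real c \<cdot>\<^sub>m 1\<^sub>m n) = A - complex_of_real c \<cdot>\<^sub>m 1\<^sub>m n"
  unfolding shift_eq[OF assms(1)] by (rule herm_lin, insert assms, auto)

lemma tail_ge: fixes A :: "complex mat" assumes A: "A \<in> carrier_mat n n" "mat_adjoint A = A"
  and Q: "projform n Q"
  shows "Re (mat_trace (Q * (A - complex_of_real c \<cdot>\<^sub>m 1\<^sub>m n))) \<le> tail_trace n A c"
  unfolding tail_trace_def
  by (rule nonneg_proj_props(2)[OF _ herm_shift[OF A] Q], insert A, auto)

lemma tail_proj: fixes A :: "complex mat" assumes A: "A \<in> carrier_mat n n" "mat_adjoint A = A"
  shows "projform n (nonneg_proj n (A - complex_of_real c \<cdot>\<^sub>m 1\<^sub>m n))"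
  by (rule nonneg_proj_props(1)[OF _ herm_shift[OF A]], insert A, auto)

lemma tail_nonneg: fixes A :: "complex mat" assumes A: "A \<in> carrier_mat n n" "mat_adjoint A = A"
  shows "0 \<le> tail_trace n A c"
proof -
  have "Re (mat_trace (0\<^sub>m n n * (A - complex_of_real c \<cdot>\<^sub>m 1\<^sub>m n))) \<le> tail_trace n A c"
    by (rule tail_ge[OF A projform_zero])
  moreover have "mat_trace (0\<^sub>m n n * (A - complex_of_real c \<cdot>\<^sub>m 1\<^sub>m n)) = 0"
    using A unfolding mat_trace_def by simp
  ultimately show ?thesis by simp
qed

lemma tail_mono: fixes A :: "complex mat" assumes A: "A \<in> carrier_mat n n" "mat_adjoint A = A"
  and cc: "c \<le> c'"
  shows "tail_trace n A c' \<le> tail_trace n A c"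
proof -
  define P where "P = nonneg_proj n (A - complex_of_real c' \<cdot>\<^sub>m 1\<^sub>m n)"
  have P: "projform n P" unfolding P_def by (rule tail_proj[OF A])
  have Pc: "P \<in> carrier_mat n n" using projform_carrier[OF P] .
  have eq: "A - complex_of_real c \<cdot>\<^sub>m 1\<^sub>m n = complex_of_real 1 \<cdot>\<^sub>m (A - complex_of_real c' \<cdot>\<^sub>m 1\<^sub>m n) + complex_of_real (c' - c) \<cdot>\<^sub>m 1\<^sub>m n"
    by (rule eq_matI, insert A, auto simp: algebra_simps)
  have "Re (mat_trace (P * (A - complex_of_real c \<cdot>\<^sub>m 1\<^sub>m n)))
      = Re (mat_trace (P * (A - complex_of_real c' \<cdot>\<^sub>m 1\<^sub>m n))) + (c' - c) * Re (mat_trace (P * 1\<^sub>m n))"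
    unfolding eq by (subst trace_lin[OF Pc], insert A, auto)
  also have "Re (mat_trace (P * (A - complex_of_real c' \<cdot>\<^sub>m 1\<^sub>m n))) = tail_trace n A c'"
    unfolding tail_trace_def P_def ..
  finally have "tail_trace n A c' \<le> Re (mat_trace (P * (A - complex_of_real c \<cdot>\<^sub>m 1\<^sub>m n)))"
    using projform_psd[OF P psd_one] cc by (simp add: mult_nonneg_nonneg)
  also have "\<dots> \<le> tail_trace n A c" by (rule tail_ge[OF A P])
  finally show ?thesis .
qed

lemma tail_convex: fixes S W :: "complex mat"
  assumes S: "S \<in> carrier_mat n n" "mat_adjoint S = S" and W: "W \<in> carrier_mat n n" "mat_adjoint W = W"
    and t: "0 \<le> t" "t \<le> 1"
  shows "tail_trace n (complex_of_real t \<cdot>\<^sub>m S + complex_of_real (1 - t) \<cdot>\<^sub>m W) c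
     \<le> t * tail_trace n S c + (1 - t) * tail_trace n W c"
proof -
  let ?R = "complex_of_real t \<cdot>\<^sub>m S + complex_of_real (1 - t) \<cdot>\<^sub>m W"
  have R: "?R \<in> carrier_mat n n" "mat_adjoint ?R = ?R" using S W herm_lin[OF S W, of t "1 - t"] by auto
  define P where "P = nonneg_proj n (?R - complex_of_real c \<cdot>\<^sub>m 1\<^sub>m n)"
  have P: "projform n P" unfolding P_def by (rule tail_proj[OF R])
  have Pc: "P \<in> carrier_mat n n" using projform_carrier[OF P] .
  have eq: "?R - complex_of_real c \<cdot>\<^sub>m 1\<^sub>m n = complex_of_real t \<cdot>\<^sub>m (S - complex_of_real c \<cdot>\<^sub>m 1\<^sub>m n) + complex_of_real (1 - t) \<cdot>\<^sub>m (W - complex_of_real c \<cdot>\<^sub>m 1\<^sub>m n)"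
    by (rule eq_matI, insert S W, auto simp: algebra_simps)
  have "tail_trace n ?R c = Re (mat_trace (P * (?R - complex_of_real c \<cdot>\<^sub>m 1\<^sub>m n)))"
    unfolding tail_trace_def P_def ..
  also have "\<dots> = t * Re (mat_trace (P * (S - complex_of_real c \<cdot>\<^sub>m 1\<^sub>m n))) + (1 - t) * Re (mat_trace (P * (W - complex_of_real c \<cdot>\<^sub>m 1\<^sub>m n)))"
    unfolding eq by (rule trace_lin[OF Pc], insert S W, auto)
  also have "\<dots> \<le> t * tail_trace n S c + (1 - t) * tail_trace n W c"
    using tail_ge[OF S P, of c] tail_ge[OF W P, of c] t
    by (intro add_mono mult_left_mono, auto)
  finally show ?thesis .
qed

lemma tail_lower: fixes S W :: "complex mat"
  assumes S: "S \<in> carrier_mat n n" "mat_adjoint S = S" and W: "psd_mat n W"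
    and t: "0 < t" "t \<le> 1"
  shows "t * tail_trace n S (c / t) \<le> tail_trace n (complex_of_real t \<cdot>\<^sub>m S + complex_of_real (1 - t) \<cdot>\<^sub>m W) c"
proof -
  have Wc: "W \<in> carrier_mat n n" "mat_adjoint W = W" using W unfolding psd_mat_def hermitian_mat_def by auto
  let ?R = "complex_of_real t \<cdot>\<^sub>m S + complex_of_real (1 - t) \<cdot>\<^sub>m W"
  have R: "?R \<in> carrier_mat n n" "mat_adjoint ?R = ?R" using S Wc herm_lin[OF S Wc, of t "1 - t"] by auto
  define P where "P = nonneg_proj n (S - complex_of_real (c / t) \<cdot>\<^sub>m 1\<^sub>m n)"
  have P: "projform n P" unfolding P_def by (rule tail_proj[OF S])
  have Pc: "P \<in> carrier_mat n n" using projform_carrier[OF P] .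
  have eq: "?R - complex_of_real c \<cdot>\<^sub>m 1\<^sub>m n = complex_of_real t \<cdot>\<^sub>m (S - complex_of_real (c / t) \<cdot>\<^sub>m 1\<^sub>m n) + complex_of_real (1 - t) \<cdot>\<^sub>m W"
    by (rule eq_matI, insert S Wc t, auto simp: algebra_simps)
  have "t * tail_trace n S (c / t) \<le> t * Re (mat_trace (P * (S - complex_of_real (c / t) \<cdot>\<^sub>m 1\<^sub>m n))) + (1 - t) * Re (mat_trace (P * W))"
    unfolding tail_trace_def P_def using projform_psd[OF P W, folded P_def] t by (simp add: P_def)
  also have "\<dots> = Re (mat_trace (P * (?R - complex_of_real c \<cdot>\<^sub>m 1\<^sub>m n)))"
    unfolding eq by (rule trace_lin[symmetric, OF Pc], insert S Wc, auto)
  also have "\<dots> \<le> tail_trace n ?R c" by (rule tail_ge[OF R P])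
  finally show ?thesis .
qed


lemma limsup_zero_iff:
  fixes f :: "nat \<Rightarrow> real"
  assumes nn: "\<And>n. 0 \<le> f n"
  shows "limsup (\<lambda>n. ereal (f n)) = 0 \<longleftrightarrow> f \<longlonglongrightarrow> 0"
proof
  assume L: "limsup (\<lambda>n. ereal (f n)) = 0"
  have "0 \<le> liminf (\<lambda>n. ereal (f n))" by (rule Liminf_bounded, insert nn, auto)
  moreover have "liminf (\<lambda>n. ereal (f n)) \<le> limsup (\<lambda>n. ereal (f n))" by (rule Liminf_le_Limsup, simp)
  ultimately have "liminf (\<lambda>n. ereal (f n)) = 0" using L by auto
  hence "(\<lambda>n. ereal (f n)) \<longlonglongrightarrow> ereal 0"
    using L tendsto_iff_Liminf_eq_Limsup[of sequentially "\<lambda>n. ereal (f n)" "ereal 0"] by (simp add: zero_ereal_def)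
  thus "f \<longlonglongrightarrow> 0" by (simp add: lim_ereal)
next
  assume "f \<longlonglongrightarrow> 0"
  hence "(\<lambda>n. ereal (f n)) \<longlonglongrightarrow> ereal 0" by (simp add: lim_ereal)
  thus "limsup (\<lambda>n. ereal (f n)) = 0" by (metis lim_imp_Limsup trivial_limit_sequentially zero_ereal_def)
qed

definition hsrc :: "(nat \<Rightarrow> nat) \<Rightarrow> (nat \<Rightarrow> complex mat) \<Rightarrow> bool" where
  "hsrc d \<tau> \<longleftrightarrow> (\<forall>n. \<tau> n \<in> carrier_mat (d n) (d n) \<and> mat_adjoint (\<tau> n) = \<tau> n)"

definition Gs :: "(nat \<Rightarrow> nat) \<Rightarrow> (nat \<Rightarrow> complex mat) \<Rightarrow> real set" where
  "Gs d \<tau> = {\<gamma>. limsup (\<lambda>n. ereal (tail_trace (d n) (\<tau> n) (exp (- real n * \<gamma>)))) = 0}"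

lemma rate_eq: "spectral_inf_entropy_rate d \<tau> = Sup (ereal ` Gs d \<tau>)"
  unfolding spectral_inf_entropy_rate_def Gs_def by (rule arg_cong[where f = Sup], auto)

lemma Gs_iff: assumes "hsrc d \<tau>"
  shows "\<gamma> \<in> Gs d \<tau> \<longleftrightarrow> (\<lambda>n. tail_trace (d n) (\<tau> n) (exp (- real n * \<gamma>))) \<longlonglongrightarrow> 0"
  unfolding Gs_def using limsup_zero_iff[of "\<lambda>n. tail_trace (d n) (\<tau> n) (exp (- real n * \<gamma>))"]
    tail_nonneg assms unfolding hsrc_def by auto

lemma Gs_down: assumes h: "hsrc d \<tau>" and g: "\<gamma>2 \<in> Gs d \<tau>" and le: "\<gamma>1 \<le> \<gamma>2"
  shows "\<gamma>1 \<in> Gs d \<tau>"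
proof -
  have hn: "\<tau> n \<in> carrier_mat (d n) (d n)" "mat_adjoint (\<tau> n) = \<tau> n" for n using h unfolding hsrc_def by auto
  have lim: "(\<lambda>n. tail_trace (d n) (\<tau> n) (exp (- real n * \<gamma>2))) \<longlonglongrightarrow> 0" using g Gs_iff[OF h] by auto
  show ?thesis unfolding Gs_iff[OF h]
  proof (rule tendsto_sandwich[OF _ _ tendsto_const lim])
    show "\<forall>\<^sub>F n in sequentially. 0 \<le> tail_trace (d n) (\<tau> n) (exp (- real n * \<gamma>1))"
      using tail_nonneg[OF hn] by auto
    have "exp (- real n * \<gamma>2) \<le> exp (- real n * \<gamma>1)" for n using le by (simp add: mult_left_mono)
    thus "\<forall>\<^sub>F n in sequentially. tail_trace (d n) (\<tau> n) (exp (- real n * \<gamma>1)) \<le> tail_trace (d n) (\<tau> n) (exp (- real n * \<gamma>2))"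
      using tail_mono[OF hn] by auto
  qed
qed

lemma Gs_inter:
  assumes hs: "hsrc d \<sigma>" and hw: "hsrc d \<omega>" and t: "0 \<le> t" "t \<le> 1"
    and gs: "\<gamma> \<in> Gs d \<sigma>" and gw: "\<gamma> \<in> Gs d \<omega>"
    and hr: "hsrc d (\<lambda>n. complex_of_real t \<cdot>\<^sub>m \<sigma> n + complex_of_real (1 - t) \<cdot>\<^sub>m \<omega> n)"
  shows "\<gamma> \<in> Gs d (\<lambda>n. complex_of_real t \<cdot>\<^sub>m \<sigma> n + complex_of_real (1 - t) \<cdot>\<^sub>m \<omega> n)"
proof -
  have sn: "\<sigma> n \<in> carrier_mat (d n) (d n)" "mat_adjoint (\<sigma> n) = \<sigma> n" for n using hs unfolding hsrc_def by auto
  have wn: "\<omega> n \<in> carrier_mat (d n) (d n)" "mat_adjoint (\<omega> n) = \<omega> n" for n using hw unfolding hsrc_def by auto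
  have rn: "(complex_of_real t \<cdot>\<^sub>m \<sigma> n + complex_of_real (1 - t) \<cdot>\<^sub>m \<omega> n) \<in> carrier_mat (d n) (d n)"
    "mat_adjoint (complex_of_real t \<cdot>\<^sub>m \<sigma> n + complex_of_real (1 - t) \<cdot>\<^sub>m \<omega> n) = (complex_of_real t \<cdot>\<^sub>m \<sigma> n + complex_of_real (1 - t) \<cdot>\<^sub>m \<omega> n)" for n
    using hr unfolding hsrc_def by auto
  have ls: "(\<lambda>n. tail_trace (d n) (\<sigma> n) (exp (- real n * \<gamma>))) \<longlonglongrightarrow> 0" using gs Gs_iff[OF hs] by auto
  have lw: "(\<lambda>n. tail_trace (d n) (\<omega> n) (exp (- real n * \<gamma>))) \<longlonglongrightarrow> 0" using gw Gs_iff[OF hw] by auto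
  have lim: "(\<lambda>n. t * tail_trace (d n) (\<sigma> n) (exp (- real n * \<gamma>)) + (1 - t) * tail_trace (d n) (\<omega> n) (exp (- real n * \<gamma>))) \<longlonglongrightarrow> 0"
    using tendsto_add[OF tendsto_mult_right[OF ls, of t] tendsto_mult_right[OF lw, of "1 - t"]]
    by (simp add: mult.commute)
  show ?thesis unfolding Gs_iff[OF hr]
  proof (rule tendsto_sandwich[OF _ _ tendsto_const lim])
    show "\<forall>\<^sub>F n in sequentially. 0 \<le> tail_trace (d n) (complex_of_real t \<cdot>\<^sub>m \<sigma> n + complex_of_real (1 - t) \<cdot>\<^sub>m \<omega> n) (exp (- real n * \<gamma>))"
      using tail_nonneg[OF rn] by auto
    show "\<forall>\<^sub>F n in sequentially. tail_trace (d n) (complex_of_real t \<cdot>\<^sub>m \<sigma> n + complex_of_real (1 - t) \<cdot>\<^sub>m \<omega> n) (exp (- real n * \<gamma>))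
       \<le> t * tail_trace (d n) (\<sigma> n) (exp (- real n * \<gamma>)) + (1 - t) * tail_trace (d n) (\<omega> n) (exp (- real n * \<gamma>))"
      using tail_convex[OF sn wn t] by auto
  qed
qed

lemma Gs_sub:
  assumes hs: "hsrc d \<sigma>" and pw: "\<And>n. psd_mat (d n) (\<omega> n)" and t: "0 < t" "t \<le> 1"
    and hr: "hsrc d (\<lambda>n. complex_of_real t \<cdot>\<^sub>m \<sigma> n + complex_of_real (1 - t) \<cdot>\<^sub>m \<omega> n)"
    and gr: "\<gamma> \<in> Gs d (\<lambda>n. complex_of_real t \<cdot>\<^sub>m \<sigma> n + complex_of_real (1 - t) \<cdot>\<^sub>m \<omega> n)"
    and lt: "\<gamma>' < \<gamma>"
  shows "\<gamma>' \<in> Gs d \<sigma>"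
proof -
  have sn: "\<sigma> n \<in> carrier_mat (d n) (d n)" "mat_adjoint (\<sigma> n) = \<sigma> n" for n using hs unfolding hsrc_def by auto
  let ?Tr = "\<lambda>n. tail_trace (d n) (complex_of_real t \<cdot>\<^sub>m \<sigma> n + complex_of_real (1 - t) \<cdot>\<^sub>m \<omega> n) (exp (- real n * \<gamma>))"
  have lr: "?Tr \<longlonglongrightarrow> 0" using gr Gs_iff[OF hr] by auto
  have lim: "(\<lambda>n. ?Tr n / t) \<longlonglongrightarrow> 0" using tendsto_divide_zero[OF lr, of t] .
  obtain N :: nat where N: "- ln t / (\<gamma> - \<gamma>') \<le> real N" using real_arch_simple by blast
  have ev: "exp (- real n * \<gamma>) / t \<le> exp (- real n * \<gamma>')" if n: "N \<le> n" for n
  proof -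
    have pos: "\<gamma> - \<gamma>' > 0" using lt by simp
    have "- ln t = (- ln t / (\<gamma> - \<gamma>')) * (\<gamma> - \<gamma>')" using pos by simp
    also have "\<dots> \<le> real N * (\<gamma> - \<gamma>')" using N pos by (intro mult_right_mono, auto)
    also have "\<dots> \<le> real n * (\<gamma> - \<gamma>')" using n pos by (intro mult_right_mono, auto)
    finally have "- real n * \<gamma> - ln t \<le> - real n * \<gamma>'" by (simp add: algebra_simps)
    hence "exp (- real n * \<gamma> - ln t) \<le> exp (- real n * \<gamma>')" by (simp only: exp_le_cancel_iff)
    moreover have "exp (- real n * \<gamma> - ln t) = exp (- real n * \<gamma>) / t" using t by (simp add: exp_diff)
    ultimately show ?thesis by metis
  qed
  show ?thesis unfolding Gs_iff[OF hs]
  proof (rule tendsto_sandwich[OF _ _ tendsto_const lim])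
    show "\<forall>\<^sub>F n in sequentially. 0 \<le> tail_trace (d n) (\<sigma> n) (exp (- real n * \<gamma>'))"
      using tail_nonneg[OF sn] by auto
    show "\<forall>\<^sub>F n in sequentially. tail_trace (d n) (\<sigma> n) (exp (- real n * \<gamma>')) \<le> ?Tr n / t"
      unfolding eventually_sequentially
    proof (intro exI allI impI)
      fix n assume n: "N \<le> n"
      have "tail_trace (d n) (\<sigma> n) (exp (- real n * \<gamma>')) \<le> tail_trace (d n) (\<sigma> n) (exp (- real n * \<gamma>) / t)"
        by (rule tail_mono[OF sn ev[OF n]])
      also have "t * \<dots> \<le> ?Tr n" by (rule tail_lower[OF sn pw t])
      finally show "tail_trace (d n) (\<sigma> n) (exp (- real n * \<gamma>')) \<le> ?Tr n / t"
        using t by (simp add: le_divide_eq mult.commute)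
    qed
  qed
qed


lemma sup_le_aux:
  assumes "\<And>\<gamma> \<gamma>'. \<gamma> \<in> A \<Longrightarrow> \<gamma>' < \<gamma> \<Longrightarrow> \<gamma>' \<in> B"
  shows "Sup (ereal ` A) \<le> Sup (ereal ` B)"
proof (rule Sup_least)
  fix x assume "x \<in> ereal ` A"
  then obtain \<gamma> where g: "\<gamma> \<in> A" and x: "x = ereal \<gamma>" by auto
  show "x \<le> Sup (ereal ` B)"
  proof (rule ccontr)
    assume "\<not> x \<le> Sup (ereal ` B)"
    hence "Sup (ereal ` B) < ereal \<gamma>" using x by simp
    then obtain z where z1: "Sup (ereal ` B) < ereal z" and z2: "ereal z < ereal \<gamma>" using ereal_dense2 by blast
    have "z \<in> B" using assms[OF g] z2 by simp
    hence "ereal z \<le> Sup (ereal ` B)" by (intro Sup_upper, auto)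
    thus False using z1 by simp
  qed
qed

lemma min_le_aux:
  assumes dA: "\<And>a b. b \<in> A \<Longrightarrow> a \<le> b \<Longrightarrow> a \<in> A"
    and dB: "\<And>a b. b \<in> B \<Longrightarrow> a \<le> b \<Longrightarrow> a \<in> B"
    and i: "\<And>\<gamma>. \<gamma> \<in> A \<Longrightarrow> \<gamma> \<in> B \<Longrightarrow> \<gamma> \<in> C"
  shows "min (Sup (ereal ` A)) (Sup (ereal ` B)) \<le> Sup (ereal ` C)"
proof (rule ccontr)
  assume "\<not> ?thesis"
  hence "Sup (ereal ` C) < min (Sup (ereal ` A)) (Sup (ereal ` B))" by (simp only: not_le)
  then obtain z where z1: "Sup (ereal ` C) < ereal z" and z2: "ereal z < min (Sup (ereal ` A)) (Sup (ereal ` B))"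
    using ereal_dense2 by blast
  have "ereal z < Sup (ereal ` A)" using z2 by simp
  then obtain a where "a \<in> A" "ereal z < ereal a" unfolding less_Sup_iff by auto
  hence zA: "z \<in> A" using dA by auto
  have "ereal z < Sup (ereal ` B)" using z2 by simp
  then obtain b where "b \<in> B" "ereal z < ereal b" unfolding less_Sup_iff by auto
  hence zB: "z \<in> B" using dB by auto
  have "z \<in> C" using i[OF zA zB] .
  hence "ereal z \<le> Sup (ereal ` C)" by (intro Sup_upper, auto)
  thus False using z1 by simp
qed

theorem mainTheorem6:
  fixes d :: "nat \<Rightarrow> nat" and \<sigma> \<omega> :: "nat \<Rightarrow> complex mat" and t :: real
  assumes "quantum_source d \<sigma>" and "quantum_source d \<omega>"
    and "0 < t" and "t < 1"
  shows "spectral_inf_entropy_rate d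
           (\<lambda>n. complex_of_real t \<cdot>\<^sub>m \<sigma> n + complex_of_real (1 - t) \<cdot>\<^sub>m \<omega> n)
         = min (spectral_inf_entropy_rate d \<sigma>) (spectral_inf_entropy_rate d \<omega>)"
proof -
  have ps: "psd_mat (d n) (\<sigma> n)" for n using assms(1) unfolding quantum_source_def density_mat_def by auto
  have pw: "psd_mat (d n) (\<omega> n)" for n using assms(2) unfolding quantum_source_def density_mat_def by auto
  have sn: "\<sigma> n \<in> carrier_mat (d n) (d n)" "mat_adjoint (\<sigma> n) = \<sigma> n" for n
    using ps[of n] unfolding psd_mat_def hermitian_mat_def by auto
  have wn: "\<omega> n \<in> carrier_mat (d n) (d n)" "mat_adjoint (\<omega> n) = \<omega> n" for n
    using pw[of n] unfolding psd_mat_def hermitian_mat_def by auto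
  have hs: "hsrc d \<sigma>" and hw: "hsrc d \<omega>" unfolding hsrc_def using sn wn by auto
  define \<rho> where "\<rho> = (\<lambda>n. complex_of_real t \<cdot>\<^sub>m \<sigma> n + complex_of_real (1 - t) \<cdot>\<^sub>m \<omega> n)"
  have hr: "hsrc d \<rho>" unfolding hsrc_def \<rho>_def using sn wn herm_lin[OF sn wn, where a=t and b="1 - t"] by auto
  have eq\<rho>: "\<rho> = (\<lambda>n. complex_of_real (1 - t) \<cdot>\<^sub>m \<omega> n + complex_of_real (1 - (1 - t)) \<cdot>\<^sub>m \<sigma> n)"
  proof (rule ext)
    fix n
    have "complex_of_real t \<cdot>\<^sub>m \<sigma> n + complex_of_real (1 - t) \<cdot>\<^sub>m \<omega> n = complex_of_real (1 - t) \<cdot>\<^sub>m \<omega> n + complex_of_real t \<cdot>\<^sub>m \<sigma> n"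
      by (rule comm_add_mat[of _ "d n" "d n"], insert sn wn, auto)
    thus "\<rho> n = complex_of_real (1 - t) \<cdot>\<^sub>m \<omega> n + complex_of_real (1 - (1 - t)) \<cdot>\<^sub>m \<sigma> n"
      unfolding \<rho>_def by simp
  qed
  have t1: "0 < 1 - t" "1 - t \<le> 1" using assms by auto
  have sub1: "\<gamma>' \<in> Gs d \<sigma>" if "\<gamma> \<in> Gs d \<rho>" "\<gamma>' < \<gamma>" for \<gamma> \<gamma>'
    by (rule Gs_sub[OF hs pw assms(3) _ hr[unfolded \<rho>_def] that[unfolded \<rho>_def]], insert assms, auto)
  have sub2: "\<gamma>' \<in> Gs d \<omega>" if "\<gamma> \<in> Gs d \<rho>" "\<gamma>' < \<gamma>" for \<gamma> \<gamma>'
    by (rule Gs_sub[OF hw ps t1 hr[unfolded eq\<rho>] that(1)[unfolded eq\<rho>] that(2)])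
  have inter: "\<gamma> \<in> Gs d \<rho>" if "\<gamma> \<in> Gs d \<sigma>" "\<gamma> \<in> Gs d \<omega>" for \<gamma>
    unfolding \<rho>_def by (rule Gs_inter[OF hs hw _ _ that hr[unfolded \<rho>_def]], insert assms, auto)
  have le1: "Sup (ereal ` Gs d \<rho>) \<le> Sup (ereal ` Gs d \<sigma>)" by (rule sup_le_aux, rule sub1)
  have le2: "Sup (ereal ` Gs d \<rho>) \<le> Sup (ereal ` Gs d \<omega>)" by (rule sup_le_aux, rule sub2)
  have ge: "min (Sup (ereal ` Gs d \<sigma>)) (Sup (ereal ` Gs d \<omega>)) \<le> Sup (ereal ` Gs d \<rho>)"
    by (rule min_le_aux[OF Gs_down[OF hs] Gs_down[OF hw] inter])
  show ?thesis unfolding rate_eq \<rho>_def[symmetric]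
    using le1 le2 ge by (intro antisym, auto)
qed

end
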